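(* Fix a constant $d\ge 0$. There is a routing labeling scheme for the family of rooted trees on $n$ nodes of depth at most $d$ with labels of length $\log n+\mathcal{O}(\log\log n)$ bits. The constant in the $\mathcal{O}(\cdot)$ may depend on $d$.
   Context: All logarithms are base $2$. The depth of a rooted tree is the maximum number of edges on a path from the root to a node. A (designer-port) routing labeling scheme for a family $\mathcal{T}$ of rooted trees consists of an encoder and a decoder. - The encoder is given $T\in\mathcal{T}$. It assigns a binary string (label) $\ell(u)$ to every node $u$. It also labels the edges from each node $u$ to its $\deg(u)$ children with distinct port numbers from $\{1,\dots,\deg(u)\}$; the encoder is free to choose these port numbers. - The decoder receives only $\ell(u)$ and $\ell(w)$ for nodes $u\neq w$ of some $T\in\mathcal{T}$; the value $\lceil\log n\rceil$, where $n=|T|$, may also be assumed known. It must return $0$ if the next node on the path from $u$ to $w$ is the parent of $u$. Otherwise it must return the port number of the first edge on that path. - The length of the scheme is the maximum label length over all trees in $\mathcal{T}$ and all their nodes. *)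

theory Defs
  imports Complex_Main
begin

text \<open>A rooted tree on n nodes is represented with node set {0..<n}, a root r, and a
parent function p. By convention p r = r (the root has no parent). Every node reaches
the root by iterating p.\<close>

definition rooted_tree :: "nat \<Rightarrow> (nat \<Rightarrow> nat) \<Rightarrow> nat \<Rightarrow> bool" where
  "rooted_tree n p r \<longleftrightarrow> r < n \<and> p r = r \<and>
     (\<forall>u<n. p u < n) \<and> (\<forall>u<n. \<exists>k. (p ^^ k) u = r)"

definition depth_le :: "nat \<Rightarrow> (nat \<Rightarrow> nat) \<Rightarrow> nat \<Rightarrow> nat \<Rightarrow> bool" where
  "depth_le n p r d \<longleftrightarrow> (\<forall>u<n. \<exists>k\<le>d. (p ^^ k) u = r)"

definition children :: "nat \<Rightarrow> (nat \<Rightarrow> nat) \<Rightarrow> nat \<Rightarrow> nat \<Rightarrow> nat set" where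
  "children n p r u = {v. v < n \<and> v \<noteq> r \<and> p v = u}"

text \<open>port v is the port number of the edge from p v to its child v; the ports of the
children of u are distinct numbers in {1..deg u}.\<close>
definition valid_ports :: "nat \<Rightarrow> (nat \<Rightarrow> nat) \<Rightarrow> nat \<Rightarrow> (nat \<Rightarrow> nat) \<Rightarrow> bool" where
  "valid_ports n p r port \<longleftrightarrow> (\<forall>u<n.
     inj_on port (children n p r u) \<and>
     port ` children n p r u \<subseteq> {1..card (children n p r u)})"

definition proper_desc :: "(nat \<Rightarrow> nat) \<Rightarrow> nat \<Rightarrow> nat \<Rightarrow> bool" where
  "proper_desc p u w \<longleftrightarrow> (\<exists>k\<ge>1. (p ^^ k) w = u)"

text \<open>The decoder, given ceiling(log n) and the labels of u and w (u different from w),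
returns 0 if the next hop from u towards w is the parent of u, and otherwise the port
of the edge from u to its child on the path to w.\<close>
definition routes :: "nat \<Rightarrow> (nat \<Rightarrow> nat) \<Rightarrow> nat \<Rightarrow> (nat \<Rightarrow> bool list) \<Rightarrow> (nat \<Rightarrow> nat)
     \<Rightarrow> (nat \<Rightarrow> bool list \<Rightarrow> bool list \<Rightarrow> nat) \<Rightarrow> bool" where
  "routes n p r lab port dec \<longleftrightarrow> (\<forall>u<n. \<forall>w<n. u \<noteq> w \<longrightarrow>
     (let out = dec (nat \<lceil>log 2 (real n)\<rceil>) (lab u) (lab w) in
       (\<not> proper_desc p u w \<longrightarrow> out = 0) \<and>
       (\<forall>v\<in>children n p r u. (\<exists>j. (p ^^ j) w = v) \<longrightarrow> out = port v)))"

end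

theory Submission imports Defs begin

fun bits :: "nat \<Rightarrow> bool list" where
  "bits m = (if m = 0 then [] else odd m # bits (m div 2))"

fun unbits :: "bool list \<Rightarrow> nat" where
  "unbits [] = 0"
| "unbits (b # bs) = (if b then 1 else 0) + 2 * unbits bs"

declare bits.simps[simp del]

lemma bits_0[simp]: "bits 0 = []" by (simp add: bits.simps)
lemma bits_pos[simp]: "m \<noteq> 0 \<Longrightarrow> bits m = odd m # bits (m div 2)" by (simp add: bits.simps)

lemma unbits_bits: "unbits (bits m) = m"
proof (induction m rule: bits.induct)
  case (1 m)
  show ?case
  proof (cases "m = 0")
    case False
    then have "unbits (bits m) = (if odd m then 1 else 0) + 2 * (m div 2)" using 1 by simp
    also have "\<dots> = m" by (cases "odd m") (simp_all add: odd_two_times_div_two_succ)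
    finally show ?thesis .
  qed simp
qed

lemma bits_inj: "bits a = bits b \<Longrightarrow> a = b"
  by (metis unbits_bits)

definition blen :: "nat \<Rightarrow> nat" where "blen m = length (bits m)"

lemma blen_less: "m < 2 ^ blen m"
proof (induction m rule: bits.induct)
  case (1 m)
  show ?case
  proof (cases "m = 0")
    case True then show ?thesis by (simp add: blen_def)
  next
    case False
    then have "blen m = Suc (blen (m div 2))" by (simp add: blen_def)
    with 1 False show ?thesis by simp
  qed
qed

lemma blen_ge: "1 \<le> m \<Longrightarrow> 2 ^ blen m \<le> 2 * m"
proof (induction m rule: bits.induct)
  case (1 m)
  then have b: "blen m = Suc (blen (m div 2))" by (simp add: blen_def)
  show ?case
  proof (cases "m = 1")
    case True then show ?thesis by (simp add: blen_def)
  next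
    case False
    with 1 have "2 ^ blen (m div 2) \<le> 2 * (m div 2)" by simp
    then show ?thesis using b by simp
  qed
qed

lemma blen_pos: "1 \<le> m \<Longrightarrow> 1 \<le> blen m"
  by (simp add: blen_def)

lemma blen_le: "1 \<le> m \<Longrightarrow> m \<le> 2 ^ k \<Longrightarrow> blen m \<le> k + 1"
proof -
  assume a: "1 \<le> m" "m \<le> 2 ^ k"
  have "2 ^ blen m \<le> (2::nat) ^ (k+1)" using blen_ge[OF a(1)] a(2) by simp
  then show ?thesis by (rule power_le_imp_le_exp[rotated]) simp
qed

fun hdr :: "nat \<Rightarrow> nat list \<Rightarrow> nat" where
  "hdr B [] = 0"
| "hdr B (x # xs) = blen x + B * hdr B xs"

fun val :: "nat list \<Rightarrow> nat" where
  "val [] = 0"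
| "val (x # xs) = x + 2 ^ blen x * val xs"

lemma hdr_lt: "\<forall>x\<in>set xs. blen x < B \<Longrightarrow> hdr B xs < B ^ length xs"
proof (induction xs)
  case Nil then show ?case by simp
next
  case (Cons x xs)
  then have "hdr B xs + 1 \<le> B ^ length xs" by simp
  then have "B * (hdr B xs + 1) \<le> B * B ^ length xs" by (rule mult_left_mono) simp
  moreover have "blen x < B" using Cons.prems by simp
  ultimately have "blen x + B * hdr B xs < B * B ^ length xs" by (simp add: algebra_simps)
  then show ?case by simp
qed

lemma hdr_inj: "\<forall>x\<in>set xs. 1 \<le> blen x \<and> blen x < B \<Longrightarrow> \<forall>x\<in>set ys. 1 \<le> blen x \<and> blen x < B
   \<Longrightarrow> hdr B xs = hdr B ys \<Longrightarrow> map blen xs = map blen ys"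
proof (induction xs arbitrary: ys)
  case Nil
  show ?case
  proof (cases ys)
    case (Cons y ys')
    then have "1 \<le> blen y" using Nil.prems(2) by simp
    then have "hdr B ys \<noteq> 0" using Cons by simp
    then show ?thesis using Nil.prems(3) by simp
  qed simp
next
  case (Cons x xs)
  note IH = Cons.IH and P = Cons.prems
  show ?case
  proof (cases ys)
    case Nil
    have "1 \<le> blen x" using P(1) by simp
    then have "hdr B (x # xs) \<noteq> 0" by simp
    then show ?thesis using P(3) Nil by simp
  next
    case (Cons y ys')
    note ys = this
    have e: "blen x + B * hdr B xs = blen y + B * hdr B ys'" using P(3) ys by simp
    have bx: "blen x < B" "blen y < B" using P(1,2) ys by auto
    have "(blen x + B * hdr B xs) mod B = blen x" using bx by simp
    moreover have "(blen y + B * hdr B ys') mod B = blen y" using bx by simp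
    ultimately have 1: "blen x = blen y" using arg_cong[OF e, of "\<lambda>z. z mod B"] by simp
    have "B * hdr B xs = B * hdr B ys'" using e 1 by simp
    then have h: "hdr B xs = hdr B ys'" using bx by simp
    have "\<forall>x\<in>set xs. 1 \<le> blen x \<and> blen x < B" "\<forall>x\<in>set ys'. 1 \<le> blen x \<and> blen x < B"
      using P(1,2) ys by auto
    then have "map blen xs = map blen ys'" using IH h by blast
    then show ?thesis using 1 ys by simp
  qed
qed

lemma val_inj: "map blen xs = map blen ys \<Longrightarrow> val xs = val ys \<Longrightarrow> xs = ys"
proof (induction xs arbitrary: ys)
  case Nil then show ?case by simp
next
  case (Cons x xs)
  then obtain y ys' where ys: "ys = y # ys'" by (cases ys) auto
  with Cons.prems have l: "blen x = blen y" and m: "map blen xs = map blen ys'" by auto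
  have e: "x + 2 ^ blen x * val xs = y + 2 ^ blen x * val ys'" using Cons.prems ys l by simp
  have "(x + 2 ^ blen x * val xs) mod 2 ^ blen x = x" using blen_less[of x] by simp
  moreover have "(y + 2 ^ blen x * val ys') mod 2 ^ blen x = y" using blen_less[of y] l by simp
  ultimately have xy: "x = y" using arg_cong[OF e, of "\<lambda>z. z mod 2 ^ blen x"] by simp
  then have "val xs = val ys'" using e by simp
  then show ?case using Cons.IH m xy ys by simp
qed

definition code :: "nat \<Rightarrow> nat \<Rightarrow> nat list \<Rightarrow> nat" where
  "code d k xs = hdr (k+2) xs + (k+2) ^ d * val xs"

definition good :: "nat \<Rightarrow> nat \<Rightarrow> nat list \<Rightarrow> bool" where
  "good d k xs \<longleftrightarrow> length xs \<le> d \<and> (\<forall>x\<in>set xs. 1 \<le> x \<and> blen x \<le> k + 1)"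

lemma hdr_lt_good: "good d k xs \<Longrightarrow> hdr (k+2) xs < (k+2) ^ d"
proof -
  assume g: "good d k xs"
  then have "hdr (k+2) xs < (k+2) ^ length xs" by (intro hdr_lt) (auto simp: good_def)
  also have "\<dots> \<le> (k+2) ^ d" using g by (intro power_increasing) (auto simp: good_def)
  finally show ?thesis .
qed

lemma code_inj: "good d k xs \<Longrightarrow> good d k ys \<Longrightarrow> code d k xs = code d k ys \<Longrightarrow> xs = ys"
proof -
  assume gx: "good d k xs" and gy: "good d k ys" and e: "code d k xs = code d k ys"
  let ?M = "(k+2)^d"
  have hx: "hdr (k+2) xs < ?M" and hy: "hdr (k+2) ys < ?M" using hdr_lt_good gx gy by auto
  have "code d k xs mod ?M = hdr (k+2) xs" "code d k ys mod ?M = hdr (k+2) ys"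
    using hx hy by (auto simp: code_def)
  then have h: "hdr (k+2) xs = hdr (k+2) ys" using arg_cong[OF e, of "\<lambda>z. z mod ?M"] by simp
  have "code d k xs div ?M = val xs" "code d k ys div ?M = val ys"
    using hx hy by (auto simp: code_def)
  then have v: "val xs = val ys" using arg_cong[OF e, of "\<lambda>z. z div ?M"] by simp
  have "map blen xs = map blen ys"
    using gx gy h by (intro hdr_inj[of _ "k+2"]) (use blen_pos in \<open>force simp: good_def\<close>)+
  then show ?thesis using v val_inj by blast
qed

lemma val_bound: "val xs < 2 ^ sum_list (map blen xs)"
proof (induction xs)
  case Nil then show ?case by simp
next
  case (Cons x xs)
  have "x + 2 ^ blen x * val xs < 2 ^ blen x + 2 ^ blen x * val xs" using blen_less[of x] by simp
  also have "\<dots> = 2 ^ blen x * (val xs + 1)" by (simp add: algebra_simps)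
  also have "\<dots> \<le> 2 ^ blen x * 2 ^ sum_list (map blen xs)" using Cons.IH
    by (intro mult_left_mono) auto
  finally show ?case by (simp add: power_add)
qed

lemma pow_sum_blen: "\<forall>x\<in>set xs. 1 \<le> x \<Longrightarrow> (2::nat) ^ sum_list (map blen xs) \<le> 2 ^ length xs * prod_list xs"
proof (induction xs)
  case Nil then show ?case by simp
next
  case (Cons x xs)
  have "(2::nat) ^ sum_list (map blen (x#xs)) = 2 ^ blen x * 2 ^ sum_list (map blen xs)" by (simp add: power_add)
  also have "\<dots> \<le> (2 * x) * (2 ^ length xs * prod_list xs)"
    using Cons blen_ge[of x] by (intro mult_mono) auto
  finally show ?case by (simp add: algebra_simps)
qed

lemma code_bound: "good d k xs \<Longrightarrow> code d k xs < (k+2)^d * 2^d * prod_list xs"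
proof -
  assume g: "good d k xs"
  have "code d k xs < (k+2)^d + (k+2)^d * val xs" using hdr_lt_good[OF g] by (simp add: code_def)
  also have "\<dots> = (k+2)^d * (val xs + 1)" by (simp add: algebra_simps)
  also have "\<dots> \<le> (k+2)^d * 2 ^ sum_list (map blen xs)" using val_bound[of xs]
    by (intro mult_left_mono) auto
  also have "\<dots> \<le> (k+2)^d * (2 ^ length xs * prod_list xs)" using g pow_sum_blen[of xs]
    by (intro mult_left_mono) (auto simp: good_def)
  also have "\<dots> \<le> (k+2)^d * (2 ^ d * prod_list xs)" using g
    by (intro mult_left_mono mult_right_mono power_increasing) (auto simp: good_def)
  finally show ?thesis by (simp add: algebra_simps)
qed


locale rt =
  fixes n :: nat and p :: "nat \<Rightarrow> nat" and r :: nat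
  assumes rt: "rooted_tree n p r"
begin

lemma r_lt: "r < n" and pr: "p r = r" and p_lt: "u < n \<Longrightarrow> p u < n"
  and reach: "u < n \<Longrightarrow> \<exists>k. (p ^^ k) u = r"
  using rt by (auto simp: rooted_tree_def)

lemma pow_lt: "u < n \<Longrightarrow> (p ^^ j) u < n"
  by (induction j) (auto simp: p_lt)

lemma root_fix: "(p ^^ j) r = r"
  by (induction j) (auto simp: pr)

lemma pow_add: "(p ^^ (a + b)) x = (p ^^ a) ((p ^^ b) x)"
  by (simp add: funpow_add)

definition dep :: "nat \<Rightarrow> nat" where "dep u = (LEAST k. (p ^^ k) u = r)"

lemma dep_eq: "u < n \<Longrightarrow> (p ^^ dep u) u = r"
proof -
  assume "u < n"
  then obtain k where "(p ^^ k) u = r" using reach by blast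
  then show ?thesis unfolding dep_def by (rule LeastI)
qed

lemma dep_min: "(p ^^ k) u = r \<Longrightarrow> dep u \<le> k"
  unfolding dep_def by (rule Least_le)

lemma beyond: "u < n \<Longrightarrow> dep u \<le> j \<Longrightarrow> (p ^^ j) u = r"
proof -
  assume "u < n" "dep u \<le> j"
  then have "(p ^^ j) u = (p ^^ ((j - dep u) + dep u)) u" by simp
  also have "\<dots> = (p ^^ (j - dep u)) ((p ^^ dep u) u)" by (rule pow_add)
  finally have "(p ^^ j) u = (p ^^ (j - dep u)) ((p ^^ dep u) u)" .
  then show ?thesis using dep_eq \<open>u < n\<close> root_fix by simp
qed

lemma dep_iter: "u < n \<Longrightarrow> j \<le> dep u \<Longrightarrow> dep ((p ^^ j) u) = dep u - j"
proof -
  assume a: "u < n" "j \<le> dep u"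
  have "(p ^^ (dep u - j)) ((p ^^ j) u) = (p ^^ ((dep u - j) + j)) u" by (rule pow_add[symmetric])
  also have "\<dots> = r" using a dep_eq by simp
  finally have "(p ^^ (dep u - j)) ((p ^^ j) u) = r" .
  then have 1: "dep ((p ^^ j) u) \<le> dep u - j" by (rule dep_min)
  have "(p ^^ (dep ((p ^^ j) u) + j)) u = r" using dep_eq pow_lt a by (simp add: pow_add)
  then have "dep u \<le> dep ((p ^^ j) u) + j" by (rule dep_min)
  with 1 show ?thesis by simp
qed

lemma dep0: "u < n \<Longrightarrow> dep u = 0 \<longleftrightarrow> u = r"
  using dep_eq dep_min[of 0 r] by fastforce

lemma dep_r[simp]: "dep r = 0"
  using dep0 r_lt by simp

lemma no_cycle: "x < n \<Longrightarrow> (p ^^ m) x = x \<Longrightarrow> 1 \<le> m \<Longrightarrow> x = r"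
proof -
  assume a: "x < n" "(p ^^ m) x = x" "1 \<le> m"
  have "(p ^^ (m * t)) x = x" for t
  proof (induction t)
    case (Suc t)
    have "(p ^^ (m * Suc t)) x = (p ^^ m) ((p ^^ (m * t)) x)" by (simp add: pow_add[symmetric])
    then show ?case using Suc a by simp
  qed simp
  then have "(p ^^ (m * dep x)) x = x" .
  moreover have "dep x \<le> m * dep x" using a by simp
  ultimately show ?thesis using beyond[of x "m * dep x"] a by simp
qed

definition ch :: "nat \<Rightarrow> nat set" where "ch u = children n p r u"

lemma ch_iff: "v \<in> ch u \<longleftrightarrow> v < n \<and> v \<noteq> r \<and> p v = u"
  by (simp add: ch_def children_def)

lemma ch_fin: "finite (ch u)" unfolding ch_def children_def by auto

lemma ch_card: "card (ch u) \<le> n"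
proof -
  have "ch u \<subseteq> {..<n}" by (auto simp: ch_iff)
  then have "card (ch u) \<le> card {..<n}" by (intro card_mono) auto
  then show ?thesis by simp
qed

definition sub :: "nat \<Rightarrow> nat set" where "sub u = {w. w < n \<and> (\<exists>j. (p ^^ j) w = u)}"

definition sz :: "nat \<Rightarrow> nat" where "sz u = card (sub u)"

lemma sub_fin: "finite (sub u)" unfolding sub_def by auto

lemma sz_le: "sz u \<le> n"
proof -
  have "sub u \<subseteq> {..<n}" by (auto simp: sub_def)
  then have "card (sub u) \<le> card {..<n}" by (intro card_mono) auto
  then show ?thesis unfolding sz_def by simp
qed

lemma sz_pos: "u < n \<Longrightarrow> 1 \<le> sz u"
proof -
  assume "u < n"
  then have "(p ^^ 0) u = u \<and> u < n" by simp
  then have "u \<in> sub u" unfolding sub_def by blast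
  then have "sub u \<noteq> {}" by blast
  then have "0 < card (sub u)" using sub_fin by (simp add: card_gt_0_iff)
  then show ?thesis unfolding sz_def by simp
qed

lemma sub_ch: "v \<in> ch u \<Longrightarrow> sub v \<subseteq> sub u"
proof
  fix w assume v: "v \<in> ch u" and "w \<in> sub v"
  then obtain j where "w < n" "(p ^^ j) w = v" by (auto simp: sub_def)
  then have "(p ^^ (Suc j)) w = u" using v by (simp add: ch_iff)
  then show "w \<in> sub u" using \<open>w < n\<close> unfolding sub_def by blast
qed

lemma sub_disj_aux: "v1 \<in> ch u \<Longrightarrow> v2 \<in> ch u \<Longrightarrow> (p ^^ j1) w = v1 \<Longrightarrow> (p ^^ j2) w = v2 \<Longrightarrow> j1 \<le> j2
  \<Longrightarrow> v1 = v2"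
proof (rule ccontr)
  assume a: "v1 \<in> ch u" "v2 \<in> ch u" "(p ^^ j1) w = v1" "(p ^^ j2) w = v2" "j1 \<le> j2" "v1 \<noteq> v2"
  define t where "t = j2 - j1"
  have t: "1 \<le> t"
  proof (rule ccontr)
    assume "\<not> 1 \<le> t"
    then have "j1 = j2" using a unfolding t_def by simp
    then show False using a by simp
  qed
  have "v2 = (p ^^ (t + j1)) w" using a unfolding t_def by simp
  also have "\<dots> = (p ^^ t) v1" using a by (simp only: pow_add)
  also have "\<dots> = (p ^^ ((t - 1) + 1)) v1" using t by simp
  also have "\<dots> = (p ^^ (t - 1)) (p v1)" by (simp only: pow_add) simp
  finally have v2: "v2 = (p ^^ (t - 1)) u" using a by (simp add: ch_iff)
  have "(p ^^ t) u = (p ^^ Suc (t - 1)) u" using t by simp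
  also have "\<dots> = p ((p ^^ (t - 1)) u)" by simp
  also have "\<dots> = u" using v2 a by (simp add: ch_iff)
  finally have "u = r" using no_cycle t a p_lt by (auto simp: ch_iff)
  then have "v2 = r" using v2 root_fix by simp
  then show False using a by (simp add: ch_iff)
qed

lemma sub_disj: "v1 \<in> ch u \<Longrightarrow> v2 \<in> ch u \<Longrightarrow> v1 \<noteq> v2 \<Longrightarrow> sub v1 \<inter> sub v2 = {}"
proof -
  assume a: "v1 \<in> ch u" "v2 \<in> ch u" "v1 \<noteq> v2"
  show ?thesis
  proof (rule ccontr)
    assume "sub v1 \<inter> sub v2 \<noteq> {}"
    then obtain w j1 j2 where "(p ^^ j1) w = v1" "(p ^^ j2) w = v2" by (auto simp: sub_def)
    show False
    proof (cases "j1 \<le> j2")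
      case True then show False using a sub_disj_aux[of v1 u v2 j1 w j2] \<open>(p ^^ j1) w = v1\<close> \<open>(p ^^ j2) w = v2\<close> by blast
    next
      case False then have "j2 \<le> j1" by simp
      then show False using a sub_disj_aux[of v2 u v1 j2 w j1] \<open>(p ^^ j1) w = v1\<close> \<open>(p ^^ j2) w = v2\<close> by blast
    qed
  qed
qed

lemma sum_sz: "(\<Sum>v\<in>ch u. sz v) \<le> sz u"
proof -
  have "(\<Sum>v\<in>ch u. sz v) = card (\<Union>v\<in>ch u. sub v)"
    unfolding sz_def using sub_disj ch_fin sub_fin by (intro card_UN_disjoint[symmetric]) auto
  also have "\<dots> \<le> sz u" unfolding sz_def using sub_ch sub_fin by (intro card_mono) auto
  finally show ?thesis .
qed

definition prec :: "nat \<Rightarrow> nat \<Rightarrow> bool" where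
  "prec a b \<longleftrightarrow> sz b < sz a \<or> (sz a = sz b \<and> a \<le> b)"

definition S :: "nat \<Rightarrow> nat set" where "S v = {v' \<in> ch (p v). prec v' v}"

definition port :: "nat \<Rightarrow> nat" where "port v = card (S v)"

lemma S_fin: "finite (S v)" unfolding S_def using ch_fin by auto

lemma port_sz: "v \<in> ch u \<Longrightarrow> port v * sz v \<le> sz u"
proof -
  assume v: "v \<in> ch u"
  then have pv: "p v = u" by (simp add: ch_iff)
  have "port v * sz v = (\<Sum>v'\<in>S v. sz v)" by (simp add: port_def)
  also have "\<dots> \<le> (\<Sum>v'\<in>S v. sz v')" by (intro sum_mono) (auto simp: S_def prec_def)
  also have "\<dots> \<le> (\<Sum>v'\<in>ch u. sz v')" using pv ch_fin by (intro sum_mono2) (auto simp: S_def)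
  also have "\<dots> \<le> sz u" by (rule sum_sz)
  finally show ?thesis .
qed

lemma port_range: "v \<in> ch u \<Longrightarrow> 1 \<le> port v \<and> port v \<le> card (ch u)"
proof -
  assume v: "v \<in> ch u"
  then have "v \<in> S v" by (auto simp: S_def prec_def ch_iff)
  then have "S v \<noteq> {}" by blast
  then have 1: "1 \<le> port v" using S_fin unfolding port_def by (simp add: card_gt_0_iff Suc_le_eq)
  have "S v \<subseteq> ch u" using v by (auto simp: S_def ch_iff)
  then have "port v \<le> card (ch u)" unfolding port_def using ch_fin by (rule card_mono[rotated])
  with 1 show ?thesis by simp
qed

lemma prec_trans: "prec a b \<Longrightarrow> prec b c \<Longrightarrow> prec a c"
  unfolding prec_def by linarith

lemma prec_antisym: "prec a b \<Longrightarrow> prec b a \<Longrightarrow> a = b"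
  unfolding prec_def by linarith

lemma prec_total: "prec a b \<or> prec b a"
  unfolding prec_def by linarith

lemma port_less: "a \<in> ch u \<Longrightarrow> b \<in> ch u \<Longrightarrow> prec a b \<Longrightarrow> a \<noteq> b \<Longrightarrow> port a < port b"
proof -
  assume a: "a \<in> ch u" "b \<in> ch u" "prec a b" "a \<noteq> b"
  then have pa: "p a = u" "p b = u" by (auto simp: ch_iff)
  have "S a \<subseteq> S b"
  proof
    fix v assume "v \<in> S a"
    then have "v \<in> ch u" "prec v a" using pa by (auto simp: S_def)
    then show "v \<in> S b" using prec_trans[OF _ a(3)] pa by (auto simp: S_def)
  qed
  moreover have "b \<in> S b" using a(2) pa by (simp add: S_def prec_def)
  moreover have "b \<notin> S a" using prec_antisym[OF a(3)] a(4) by (auto simp: S_def)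
  ultimately have "S a \<subset> S b" by blast
  then show ?thesis unfolding port_def using S_fin by (rule psubset_card_mono[rotated])
qed

lemma port_inj: "inj_on port (ch u)"
proof (rule inj_onI, rule ccontr)
  fix a b assume a: "a \<in> ch u" "b \<in> ch u" "port a = port b" "a \<noteq> b"
  show False
  proof (cases "prec a b")
    case True then have "port a < port b" using port_less[OF a(1,2)] a(4) by blast
    then show False using a(3) by simp
  next
    case False then have "prec b a" using prec_total by blast
    then have "port b < port a" using port_less[OF a(2,1)] a(4) by blast
    then show False using a(3) by simp
  qed
qed

lemma valid: "valid_ports n p r port"
  unfolding valid_ports_def
proof (intro allI impI conjI)
  fix u assume "u < n"
  show "inj_on port (children n p r u)" using port_inj[of u] by (simp add: ch_def)
  show "port ` children n p r u \<subseteq> {1..card (children n p r u)}"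
  proof
    fix x assume "x \<in> port ` children n p r u"
    then obtain v where "v \<in> ch u" "x = port v" by (auto simp: ch_def)
    then show "x \<in> {1..card (children n p r u)}" using port_range[of v u] by (simp add: ch_def)
  qed
qed

definition ps :: "nat \<Rightarrow> nat list" where
  "ps w = map (\<lambda>i. port ((p ^^ (dep w - Suc i)) w)) [0..<dep w]"

lemma ps_len: "length (ps w) = dep w" by (simp add: ps_def)

lemma ps_nth: "i < dep w \<Longrightarrow> ps w ! i = port ((p ^^ (dep w - Suc i)) w)"
  by (simp add: ps_def)

lemma ps_anc: "w < n \<Longrightarrow> j \<le> dep w \<Longrightarrow> ps ((p ^^ j) w) = take (dep w - j) (ps w)"
proof -
  assume a: "w < n" "j \<le> dep w"
  have d: "dep ((p ^^ j) w) = dep w - j" using dep_iter a by simp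
  show ?thesis
  proof (rule nth_equalityI)
    show "length (ps ((p ^^ j) w)) = length (take (dep w - j) (ps w))" using d by (simp add: ps_len)
  next
    fix i assume "i < length (ps ((p ^^ j) w))"
    then have i: "i < dep w - j" using d by (simp add: ps_len)
    have "ps ((p ^^ j) w) ! i = port ((p ^^ (dep w - j - Suc i)) ((p ^^ j) w))" using i d by (simp add: ps_nth)
    also have "\<dots> = port ((p ^^ (dep w - Suc i)) w)" using i by (simp add: pow_add[symmetric])
    also have "\<dots> = take (dep w - j) (ps w) ! i" using i by (simp add: ps_nth)
    finally show "ps ((p ^^ j) w) ! i = take (dep w - j) (ps w) ! i" .
  qed
qed

lemma ch_self: "a < n \<Longrightarrow> a \<noteq> r \<Longrightarrow> a \<in> ch (p a)"
  by (simp add: ch_iff)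

lemma ps_inj: "a < n \<Longrightarrow> u < n \<Longrightarrow> dep a = m \<Longrightarrow> dep u = m \<Longrightarrow> ps a = ps u \<Longrightarrow> a = u"
proof (induction m arbitrary: a u)
  case 0 then show ?case using dep0 by auto
next
  case (Suc m)
  have da: "dep (p a) = m" and du: "dep (p u) = m"
    using dep_iter[of a 1] dep_iter[of u 1] Suc.prems by auto
  have "ps (p a) = take m (ps a)" "ps (p u) = take m (ps u)"
    using ps_anc[of a 1] ps_anc[of u 1] Suc.prems by auto
  then have "p a = p u" using Suc.IH[OF p_lt p_lt da du] Suc.prems by simp
  moreover have "port a = port u" using ps_nth[of m a] ps_nth[of m u] Suc.prems by simp
  moreover have "a \<noteq> r" "u \<noteq> r" using dep0 Suc.prems by auto
  ultimately have pp: "p a = p u" and pt: "port a = port u" and ar: "a \<noteq> r" "u \<noteq> r" by auto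
  have ia: "a \<in> ch (p a)" using ch_self Suc.prems(1) ar(1) by blast
  have "u \<in> ch (p u)" using ch_self Suc.prems(2) ar(2) by blast
  then have iu: "u \<in> ch (p a)" using pp by simp
  show ?case using inj_onD[OF port_inj[of "p a"] pt ia iu] .
qed

lemma ps_entries: "w < n \<Longrightarrow> x \<in> set (ps w) \<Longrightarrow> 1 \<le> x \<and> x \<le> n"
proof -
  assume w: "w < n" "x \<in> set (ps w)"
  then obtain i where i: "i < dep w" "x = port ((p ^^ (dep w - Suc i)) w)" by (auto simp: ps_def)
  define y where "y = (p ^^ (dep w - Suc i)) w"
  have "dep y = Suc i" using dep_iter[of w "dep w - Suc i"] w i unfolding y_def by simp
  then have "y \<noteq> r" "y < n" using dep0 pow_lt w unfolding y_def by auto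
  then have "y \<in> ch (p y)" by (rule ch_self[rotated])
  then show ?thesis using port_range[of y "p y"] ch_card[of "p y"] i unfolding y_def by auto
qed

lemma ps_prod_aux: "w < n \<Longrightarrow> dep w = m \<Longrightarrow> prod_list (ps w) * sz w \<le> sz r"
proof (induction m arbitrary: w)
  case 0 then show ?case using dep0 by (simp add: ps_def)
next
  case (Suc m)
  have da: "dep (p w) = m" using dep_iter[of w 1] Suc.prems by auto
  have t: "ps (p w) = take m (ps w)" using ps_anc[of w 1] Suc.prems by auto
  have l: "ps w ! m = port w" using ps_nth[of m w] Suc.prems by simp
  have "ps w = take m (ps w) @ [ps w ! m]" using Suc.prems ps_len
    using take_Suc_conv_app_nth[of m "ps w"] by simp
  then have e: "ps w = ps (p w) @ [port w]" using t l by simp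
  have wr: "w \<noteq> r" using dep0 Suc.prems by auto
  have "prod_list (ps w) * sz w = prod_list (ps (p w)) * (port w * sz w)" using e by simp
  also have "\<dots> \<le> prod_list (ps (p w)) * sz (p w)"
    using port_sz[OF ch_self[OF Suc.prems(1) wr]] by (rule mult_left_mono) simp
  also have "\<dots> \<le> sz r" using Suc.IH[OF p_lt[OF Suc.prems(1)] da] .
  finally show ?case .
qed

lemma ps_prod: "w < n \<Longrightarrow> prod_list (ps w) \<le> n"
proof -
  assume w: "w < n"
  have "prod_list (ps w) \<le> prod_list (ps w) * sz w" using sz_pos[OF w] by simp
  also have "\<dots> \<le> sz r" using ps_prod_aux w by simp
  also have "\<dots> \<le> n" by (rule sz_le)
  finally show ?thesis .
qed

lemma route_child: "w < n \<Longrightarrow> v \<in> ch u \<Longrightarrow> (p ^^ j) w = v \<Longrightarrow>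
   length (ps u) < length (ps w) \<and> take (length (ps u)) (ps w) = ps u \<and> ps w ! length (ps u) = port v"
proof -
  assume a: "w < n" "v \<in> ch u" "(p ^^ j) w = v"
  have v: "v \<noteq> r" "p v = u" using a by (auto simp: ch_iff)
  have j: "j < dep w"
  proof (rule ccontr)
    assume "\<not> j < dep w"
    then have "(p ^^ j) w = r" using beyond[of w j] a by simp
    then show False using a v by simp
  qed
  have u: "(p ^^ Suc j) w = u" using a v by simp
  have du: "dep u = dep w - Suc j" using dep_iter[of w "Suc j"] u a j by simp
  have pu: "ps u = take (dep w - Suc j) (ps w)" using ps_anc[of w "Suc j"] u a j by simp
  have "ps w ! (dep w - Suc j) = port ((p ^^ (dep w - Suc (dep w - Suc j))) w)" using j by (simp add: ps_nth)
  also have "dep w - Suc (dep w - Suc j) = j" using j by simp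
  finally have "ps w ! (dep w - Suc j) = port v" using a by simp
  then show ?thesis using pu du j by (simp add: ps_len)
qed

lemma route_prefix: "w < n \<Longrightarrow> u < n \<Longrightarrow> length (ps u) < length (ps w) \<Longrightarrow> take (length (ps u)) (ps w) = ps u
   \<Longrightarrow> proper_desc p u w"
proof -
  assume a: "w < n" "u < n" "length (ps u) < length (ps w)" "take (length (ps u)) (ps w) = ps u"
  define k where "k = dep w - dep u"
  have lt: "dep u < dep w" using a by (simp add: ps_len)
  have "dep ((p ^^ k) w) = dep u" using dep_iter[of w k] a lt unfolding k_def by simp
  moreover have "ps ((p ^^ k) w) = ps u" using ps_anc[of w k] a lt unfolding k_def by (simp add: ps_len)
  ultimately have "(p ^^ k) w = u" using ps_inj pow_lt a by blast
  moreover have "1 \<le> k" using lt unfolding k_def by simp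
  ultimately show ?thesis unfolding proper_desc_def by blast
qed

end


lemma n_le_pow: "1 \<le> n \<Longrightarrow> n \<le> 2 ^ nat \<lceil>log 2 (real n)\<rceil>"
proof -
  assume n: "1 \<le> n"
  have l: "0 \<le> log 2 (real n)" using n by simp
  have "real n = 2 powr log 2 (real n)" using n by simp
  also have "\<dots> \<le> 2 powr real_of_int \<lceil>log 2 (real n)\<rceil>" by (intro powr_mono) auto
  also have "\<dots> = 2 powr real (nat \<lceil>log 2 (real n)\<rceil>)" using l by simp
  also have "\<dots> = 2 ^ nat \<lceil>log 2 (real n)\<rceil>" by (simp add: powr_realpow)
  finally show ?thesis by (metis of_nat_le_iff of_nat_numeral of_nat_power)
qed

lemma len_bound:
  fixes n c d :: nat
  assumes n: "16 \<le> n" and c: "c < (nat \<lceil>log 2 (real n)\<rceil> + 2) ^ d * 2 ^ d * n"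
  shows "real (blen c) \<le> log 2 (real n) + real (2*d+1) * log 2 (log 2 (real n))"
proof -
  define L where "L = log 2 (real n)"
  have L4: "4 \<le> L" unfolding L_def using n by (simp add: le_log_iff)
  have LL: "2 \<le> log 2 L" using L4 by (simp add: le_log_iff)
  show ?thesis
  proof (cases "c = 0")
    case True
    then show ?thesis using L4 LL unfolding L_def[symmetric] by (simp add: blen_def)
  next
    case False
    define k where "k = nat \<lceil>L\<rceil>"
    have kL: "real k \<le> L + 1" unfolding k_def using L4 by linarith
    have B: "real (k + 2) \<le> 2 * L" using kL L4 by simp
    have logB: "log 2 (real (k+2)) \<le> 1 + log 2 L"
    proof -
      have "log 2 (real (k+2)) \<le> log 2 (2 * L)" using B by (intro log_mono) auto
      also have "\<dots> = 1 + log 2 L" using L4 by (simp add: log_mult)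
      finally show ?thesis .
    qed
    have "(2::nat) ^ blen c \<le> 2 * c" using blen_ge False by simp
    define X where "X = 2 * ((k + 2) ^ d * 2 ^ d * n)"
    have "(2::nat) ^ blen c < X" using c \<open>2 ^ blen c \<le> 2 * c\<close> unfolding k_def L_def X_def by linarith
    then have "real ((2::nat) ^ blen c) < real X" by (simp only: of_nat_less_iff)
    then have X1: "2 powr real (blen c) < real X" by (simp add: powr_realpow)
    have "0 < real X" using X1 by (meson le_less_trans powr_ge_zero)
    then have "real (blen c) < log 2 (real X)" using X1 by (simp add: less_log_iff)
    then have "real (blen c) < log 2 (real (2 * ((k + 2) ^ d * 2 ^ d * n)))" unfolding X_def .
    also have "\<dots> = 1 + d * log 2 (real (k+2)) + d + L" using n unfolding L_def
      by (simp add: log_mult log_nat_power)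
    also have "\<dots> \<le> 1 + d * (1 + log 2 L) + d + L" using logB by (simp add: mult_left_mono)
    also have "\<dots> \<le> L + real (2*d+1) * log 2 L"
    proof -
      have "real d * 2 \<le> real d * log 2 L" using LL by (intro mult_left_mono) auto
      then show ?thesis using LL by (simp add: algebra_simps)
    qed
    finally show ?thesis unfolding L_def by simp
  qed
qed

definition dcd :: "nat \<Rightarrow> nat \<Rightarrow> bool list \<Rightarrow> nat list" where
  "dcd d k a = (SOME xs. good d k xs \<and> bits (code d k xs) = a)"

definition dec :: "nat \<Rightarrow> nat \<Rightarrow> bool list \<Rightarrow> bool list \<Rightarrow> nat" where
  "dec d k a b = (let xs = dcd d k a; ys = dcd d k b in
     if length xs < length ys \<and> take (length xs) ys = xs then ys ! length xs else 0)"

lemma dcd_eq: "good d k xs \<Longrightarrow> dcd d k (bits (code d k xs)) = xs"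
  unfolding dcd_def by (rule some_equality) (auto dest: bits_inj code_inj)

theorem mainTheorem6:
  fixes d :: nat
  shows "\<exists>(c::real) (N::nat) (dec :: nat \<Rightarrow> bool list \<Rightarrow> bool list \<Rightarrow> nat).
     \<forall>n p r. rooted_tree n p r \<and> depth_le n p r d \<longrightarrow>
       (\<exists>(lab :: nat \<Rightarrow> bool list) (port :: nat \<Rightarrow> nat).
          valid_ports n p r port \<and> routes n p r lab port dec \<and>
          (n \<ge> N \<longrightarrow> (\<forall>u<n. real (length (lab u)) \<le> log 2 (real n) + c * log 2 (log 2 (real n)))))"
proof (intro exI[of _ "real (2*d+1)"] exI[of _ 16] exI[of _ "dec d"] allI impI, elim conjE)
  fix n p r assume T: "rooted_tree n p r" and D: "depth_le n p r d"
  interpret rt n p r by (rule rt.intro[OF T])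
  define k where "k = nat \<lceil>log 2 (real n)\<rceil>"
  define lab where "lab u = bits (code d k (ps u))" for u
  have n1: "1 \<le> n" using r_lt by simp
  have nk: "n \<le> 2 ^ k" unfolding k_def using n_le_pow n1 .
  have good: "good d k (ps u)" if u: "u < n" for u
  proof -
    obtain j where "j \<le> d" "(p ^^ j) u = r" using D u by (auto simp: depth_le_def)
    then have "length (ps u) \<le> d" using dep_min by (metis le_trans ps_len)
    moreover have "\<forall>x\<in>set (ps u). 1 \<le> x \<and> blen x \<le> k + 1"
      using ps_entries[OF u] nk blen_le by (meson le_trans)
    ultimately show ?thesis by (simp add: good_def)
  qed
  have dl: "dcd d k (lab u) = ps u" if "u < n" for u
    unfolding lab_def using good[OF that] by (rule dcd_eq)
  have R: "routes n p r lab port (dec d)"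
    unfolding routes_def Let_def k_def[symmetric]
  proof (intro allI impI conjI ballI)
    fix u w assume u: "u < n" and w: "w < n" and "u \<noteq> w"
    have e: "dec d k (lab u) (lab w) = (if length (ps u) < length (ps w) \<and> take (length (ps u)) (ps w) = ps u
        then ps w ! length (ps u) else 0)"
      unfolding dec_def Let_def dl[OF u] dl[OF w] ..
    {
      assume "\<not> proper_desc p u w"
      then show "dec d k (lab u) (lab w) = 0" using e route_prefix[OF w u] by auto
    }
    {
      fix v assume v: "v \<in> children n p r u" and "\<exists>j. (p ^^ j) w = v"
      then obtain j where j: "(p ^^ j) w = v" by blast
      have "v \<in> ch u" using v by (simp add: ch_def)
      from route_child[OF w this j] e show "dec d k (lab u) (lab w) = port v" by simp
    }
  qed
  show "\<exists>lab port. valid_ports n p r port \<and> routes n p r lab port (dec d) \<and>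
          (16 \<le> n \<longrightarrow> (\<forall>u<n. real (length (lab u)) \<le> log 2 (real n) + real (2 * d + 1) * log 2 (log 2 (real n))))"
  proof (intro exI[of _ lab] exI[of _ port] conjI valid R impI allI)
    fix u assume n16: "16 \<le> n" and u: "u < n"
    have "code d k (ps u) < (k+2)^d * 2^d * prod_list (ps u)" using code_bound good[OF u] by blast
    also have "\<dots> \<le> (k+2)^d * 2^d * n" using ps_prod[OF u] by (rule mult_left_mono) simp
    finally show "real (length (lab u)) \<le> log 2 (real n) + real (2 * d + 1) * log 2 (log 2 (real n))"
      using len_bound[OF n16] unfolding lab_def blen_def[symmetric] k_def by blast
  qed
qed

end
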